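(* Let $(X,\mathscr{R})$ be a closed mixed reaction network with $\mathscr{R}=\mathscr{R}_{\mathrm{rev}}\sqcup\mathscr{R}_{\mathrm{irr}}$ and stoichiometric matrix $S$. Then $(X,\mathscr{R})$ is thermodynamically sound if and only if there is no irreversible futile cycle.
   Context: A reaction network (RN) $(X,\mathscr{R})$ consists of a finite non-empty set $X$ of species and a finite non-empty set $\mathscr{R}$ of reactions. Each reaction $r$ is given by stoichiometric coefficients $s^-_{xr},s^+_{xr}\in\mathbb{N}_0$ ($x\in X$), written $\sum_x s^-_{xr}x\to\sum_x s^+_{xr}x$. The stoichiometric matrix $S\in\mathbb{Z}^{X\times\mathscr{R}}$ has entries $S_{xr}=s^+_{xr}-s^-_{xr}$. A reaction $r$ is proper if there are $x,y\in X$ with $S_{xr}<0<S_{yr}$, and the RN is closed if all its reactions are proper. The reverse $\bar r$ of a reaction $r$ has $s^-_{x\bar r}=s^+_{xr}$ and $s^+_{x\bar r}=s^-_{xr}$ for all $x$. A mixed RN has $\mathscr{R}=\mathscr{R}_{\mathrm{rev}}\sqcup\mathscr{R}_{\mathrm{irr}}$, where $r\in\mathscr{R}_{\mathrm{rev}}$ implies $\bar r\in\mathscr{R}_{\mathrm{rev}}$, and $r\in\mathscr{R}_{\mathrm{irr}}$ implies $\bar r\notin\mathscr{R}$. Vector notation for $v\in\mathbb{R}^{\mathscr{R}}$: - $v\ge0$ means all entries are non-negative. - $v>0$ means $v\ge 0$ and $v\ne0$. - $v\gg0$ means all entries are positive. A futile cycle is a vector $v>0$ with $Sv=0$. An irreversible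 futile cycle is a futile cycle with $\operatorname{supp}(v)\subseteq\mathscr{R}_{\mathrm{irr}}$. A vector of reaction energies is any $g\in\mathbb{R}^{\mathscr{R}}$. The triple $(X,\mathscr{R},g)$ is thermodynamic if $Sv=0$ implies $\langle g,v\rangle=0$ for all $v\in\mathbb{R}^{\mathscr{R}}$, i.e. $g\in(\ker S)^\perp$. The mixed RN is thermodynamically sound if there is $g$ such that $(X,\mathscr{R},g)$ is thermodynamic and $g_r<0$ for all $r\in\mathscr{R}_{\mathrm{irr}}$. *)

theory Defs
  imports Complex_Main
begin

text \<open>A reaction is identified with its pair of stoichiometric coefficient vectors
  (reactant coefficients s^-, product coefficients s^+).\<close>
type_synonym 'x reaction = "('x \<Rightarrow> nat) \<times> ('x \<Rightarrow> nat)"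

definition reactant_coeff :: "'x reaction \<Rightarrow> 'x \<Rightarrow> nat" where
  "reactant_coeff r x = fst r x"

definition product_coeff :: "'x reaction \<Rightarrow> 'x \<Rightarrow> nat" where
  "product_coeff r x = snd r x"

definition rev_reaction :: "'x reaction \<Rightarrow> 'x reaction" where
  "rev_reaction r = (snd r, fst r)"

definition stoich :: "'x \<Rightarrow> 'x reaction \<Rightarrow> int" where
  "stoich x r = int (product_coeff r x) - int (reactant_coeff r x)"

definition reaction_network :: "'x set \<Rightarrow> 'x reaction set \<Rightarrow> bool" where
  "reaction_network X R \<longleftrightarrow> finite X \<and> X \<noteq> {} \<and> finite R \<and> R \<noteq> {} \<and>
     (\<forall>r\<in>R. \<forall>x. x \<notin> X \<longrightarrow> reactant_coeff r x = 0 \<and> product_coeff r x = 0)"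

definition proper :: "'x set \<Rightarrow> 'x reaction \<Rightarrow> bool" where
  "proper X r \<longleftrightarrow> (\<exists>x\<in>X. \<exists>y\<in>X. stoich x r < 0 \<and> 0 < stoich y r)"

definition closed_RN :: "'x set \<Rightarrow> 'x reaction set \<Rightarrow> bool" where
  "closed_RN X R \<longleftrightarrow> (\<forall>r\<in>R. proper X r)"

definition mixed_RN :: "'x set \<Rightarrow> 'x reaction set \<Rightarrow> 'x reaction set \<Rightarrow> 'x reaction set \<Rightarrow> bool" where
  "mixed_RN X R Rrev Rirr \<longleftrightarrow> reaction_network X R \<and>
     R = Rrev \<union> Rirr \<and> Rrev \<inter> Rirr = {} \<and>
     (\<forall>r\<in>Rrev. rev_reaction r \<in> Rrev) \<and>
     (\<forall>r\<in>Rirr. rev_reaction r \<notin> R)"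

definition stoich_kernel :: "'x set \<Rightarrow> 'x reaction set \<Rightarrow> ('x reaction \<Rightarrow> real) \<Rightarrow> bool" where
  "stoich_kernel X R v \<longleftrightarrow> (\<forall>x\<in>X. (\<Sum>r\<in>R. real_of_int (stoich x r) * v r) = 0)"

definition futile_cycle :: "'x set \<Rightarrow> 'x reaction set \<Rightarrow> ('x reaction \<Rightarrow> real) \<Rightarrow> bool" where
  "futile_cycle X R v \<longleftrightarrow> (\<forall>r\<in>R. 0 \<le> v r) \<and> (\<exists>r\<in>R. v r \<noteq> 0) \<and> stoich_kernel X R v"

definition irreversible_futile_cycle ::
  "'x set \<Rightarrow> 'x reaction set \<Rightarrow> 'x reaction set \<Rightarrow> ('x reaction \<Rightarrow> real) \<Rightarrow> bool" where
  "irreversible_futile_cycle X R Rirr v \<longleftrightarrow> futile_cycle X R v \<and> (\<forall>r\<in>R. v r \<noteq> 0 \<longrightarrow> r \<in> Rirr)"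

definition thermodynamic :: "'x set \<Rightarrow> 'x reaction set \<Rightarrow> ('x reaction \<Rightarrow> real) \<Rightarrow> bool" where
  "thermodynamic X R g \<longleftrightarrow> (\<forall>v. stoich_kernel X R v \<longrightarrow> (\<Sum>r\<in>R. g r * v r) = 0)"

definition thermodynamically_sound :: "'x set \<Rightarrow> 'x reaction set \<Rightarrow> 'x reaction set \<Rightarrow> bool" where
  "thermodynamically_sound X R Rirr \<longleftrightarrow> (\<exists>g. thermodynamic X R g \<and> (\<forall>r\<in>Rirr. g r < 0))"

end

theory Submission
  imports Defs
begin

definition dotp :: "'x set \<Rightarrow> ('x \<Rightarrow> real) \<Rightarrow> ('x \<Rightarrow> real) \<Rightarrow> real" where
  "dotp X y v = (\<Sum>x\<in>X. y x * v x)"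

lemma dotp_lin: "dotp X (\<lambda>x. c * z x + d * y x) v = c * dotp X z v + d * dotp X y v"
  by (simp add: dotp_def sum.distrib sum_distrib_left algebra_simps)

lemma dotp_lin2: "dotp X y (\<lambda>x. c * u x - d * w x) = c * dotp X y u - d * dotp X y w"
  by (simp add: dotp_def sum_subtractf sum_distrib_left algebra_simps)

lemma gordan:
  assumes "finite I" and fX: "finite X"
  shows "\<forall>a. (\<exists>y. \<forall>r\<in>I. dotp X y (a r) < 0) \<or>
     (\<exists>l. (\<forall>r\<in>I. 0 \<le> l r) \<and> (\<exists>r\<in>I. l r \<noteq> 0) \<and> (\<forall>x\<in>X. (\<Sum>r\<in>I. l r * a r x) = 0))"
  using assms(1)
proof (induction I rule: finite_induct)
  case empty
  then show ?case by auto
next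
  case (insert r0 I')
  show ?case
  proof
    fix a :: "'a \<Rightarrow> 'b \<Rightarrow> real"
    let ?G = "(\<exists>y. \<forall>r\<in>insert r0 I'. dotp X y (a r) < 0)"
    let ?L = "(\<exists>l. (\<forall>r\<in>insert r0 I'. 0 \<le> l r) \<and> (\<exists>r\<in>insert r0 I'. l r \<noteq> 0) \<and>
          (\<forall>x\<in>X. (\<Sum>r\<in>insert r0 I'. l r * a r x) = 0))"
    show "?G \<or> ?L"
    proof (cases "I' = {}")
      case True
      show ?thesis
      proof (cases "\<forall>x\<in>X. a r0 x = 0")
        case True
        then have ?L using \<open>I' = {}\<close> by (intro exI[of _ "\<lambda>_. 1"]) auto
        then show ?thesis ..
      next
        case False
        then obtain x0 where x0: "x0 \<in> X" "a r0 x0 \<noteq> 0" by auto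
        have "dotp X (\<lambda>x. - a r0 x) (a r0) < 0"
        proof -
          have "0 < (\<Sum>x\<in>X. a r0 x * a r0 x)"
          proof (rule sum_pos2[OF _ x0(1)])
            show "finite X" by (rule fX)
          qed (use x0 in \<open>auto simp: not_square_less_zero zero_less_mult_iff\<close>)
          then show ?thesis by (simp add: dotp_def sum_negf)
        qed
        then have ?G using \<open>I' = {}\<close> by auto
        then show ?thesis ..
      qed
    next
      case Ine: False
      from insert.IH have "(\<exists>y. \<forall>r\<in>I'. dotp X y (a r) < 0) \<or>
        (\<exists>l. (\<forall>r\<in>I'. 0 \<le> l r) \<and> (\<exists>r\<in>I'. l r \<noteq> 0) \<and> (\<forall>x\<in>X. (\<Sum>r\<in>I'. l r * a r x) = 0))"
        by (rule spec)
      then show ?thesis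
      proof
        assume "\<exists>l. (\<forall>r\<in>I'. 0 \<le> l r) \<and> (\<exists>r\<in>I'. l r \<noteq> 0) \<and> (\<forall>x\<in>X. (\<Sum>r\<in>I'. l r * a r x) = 0)"
        then obtain l where l: "\<forall>r\<in>I'. 0 \<le> l r" "\<exists>r\<in>I'. l r \<noteq> 0" "\<forall>x\<in>X. (\<Sum>r\<in>I'. l r * a r x) = 0"
          by blast
        have ?L
        proof (intro exI[of _ "l(r0 := 0)"] conjI ballI)
          fix x assume x: "x \<in> X"
          have "(\<Sum>r\<in>insert r0 I'. (l(r0 := 0)) r * a r x) = (\<Sum>r\<in>I'. (l(r0 := 0)) r * a r x)"
            using insert.hyps by simp
          also have "\<dots> = (\<Sum>r\<in>I'. l r * a r x)"
            using insert.hyps(2) by (intro sum.cong) auto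
          finally show "(\<Sum>r\<in>insert r0 I'. (l(r0 := 0)) r * a r x) = 0" using l(3) x by simp
        qed (use l insert.hyps(2) in auto)
        then show ?thesis ..
      next
        assume "\<exists>y. \<forall>r\<in>I'. dotp X y (a r) < 0"
        then obtain y where y: "\<forall>r\<in>I'. dotp X y (a r) < 0" by blast
        show ?thesis
        proof (cases "dotp X y (a r0) < 0")
          case True
          then have ?G using y by auto
          then show ?thesis ..
        next
          case False
          define \<alpha> where "\<alpha> = dotp X y (a r0)"
          have \<alpha>: "\<alpha> \<ge> 0" using False \<alpha>_def by simp
          define b where "b = (\<lambda>r x. \<alpha> * a r x - dotp X y (a r) * a r0 x)"
          from insert.IH have "(\<exists>z. \<forall>r\<in>I'. dotp X z (b r) < 0) \<or>
            (\<exists>l. (\<forall>r\<in>I'. 0 \<le> l r) \<and> (\<exists>r\<in>I'. l r \<noteq> 0) \<and> (\<forall>x\<in>X. (\<Sum>r\<in>I'. l r * b r x) = 0))"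
            by (rule spec)
          then show ?thesis
          proof
            assume "\<exists>l. (\<forall>r\<in>I'. 0 \<le> l r) \<and> (\<exists>r\<in>I'. l r \<noteq> 0) \<and> (\<forall>x\<in>X. (\<Sum>r\<in>I'. l r * b r x) = 0)"
            then obtain l where l: "\<forall>r\<in>I'. 0 \<le> l r" "\<exists>r\<in>I'. l r \<noteq> 0"
              "\<forall>x\<in>X. (\<Sum>r\<in>I'. l r * b r x) = 0" by blast
            define c where "c = (\<Sum>r\<in>I'. l r * (- dotp X y (a r)))"
            have cpos: "c > 0"
            proof -
              from l(2) obtain r1 where r1: "r1 \<in> I'" "l r1 \<noteq> 0" by blast
              show ?thesis unfolding c_def
              proof (rule sum_pos2[OF insert.hyps(1) r1(1)])
                show "0 < l r1 * - dotp X y (a r1)" using r1 l(1) y by (simp add: mult_pos_neg order_le_neq_trans)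
                show "\<And>i. i \<in> I' \<Longrightarrow> 0 \<le> l i * - dotp X y (a i)"
                  using l(1) y by (simp add: less_imp_le mult_nonneg_nonpos)
              qed
            qed
            define l' where "l' = (\<lambda>r. if r = r0 then c else \<alpha> * l r)"
            have ?L
            proof (intro exI[of _ l'] conjI ballI)
              fix r assume "r \<in> insert r0 I'"
              then show "0 \<le> l' r" using l(1) \<alpha> cpos by (auto simp: l'_def)
            next
              show "\<exists>r\<in>insert r0 I'. l' r \<noteq> 0" using cpos by (auto simp: l'_def)
            next
              fix x assume x: "x \<in> X"
              have "(\<Sum>r\<in>insert r0 I'. l' r * a r x) = c * a r0 x + (\<Sum>r\<in>I'. \<alpha> * l r * a r x)"
                using insert.hyps by (simp add: l'_def) (intro sum.cong, auto)
              also have "\<dots> = (\<Sum>r\<in>I'. l r * (- dotp X y (a r)) * a r0 x) + (\<Sum>r\<in>I'. \<alpha> * l r * a r x)"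
                by (simp add: c_def sum_distrib_right)
              also have "\<dots> = (\<Sum>r\<in>I'. l r * (- dotp X y (a r)) * a r0 x + \<alpha> * l r * a r x)"
                by (rule sum.distrib[symmetric])
              also have "\<dots> = (\<Sum>r\<in>I'. l r * b r x)"
                by (rule sum.cong) (simp_all add: b_def algebra_simps)
              also have "\<dots> = 0" using l(3) x by auto
              finally show "(\<Sum>r\<in>insert r0 I'. l' r * a r x) = 0" .
            qed
            then show ?thesis ..
          next
            assume "\<exists>z. \<forall>r\<in>I'. dotp X z (b r) < 0"
            then obtain z where z: "\<forall>r\<in>I'. dotp X z (b r) < 0" by blast
            have zb: "dotp X z (b r) = \<alpha> * dotp X z (a r) - dotp X y (a r) * dotp X z (a r0)" for r
              unfolding b_def by (rule dotp_lin2)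
            show ?thesis
            proof (cases "\<alpha> = 0")
              case False
              then have ap: "\<alpha> > 0" using \<alpha> by simp
              define K where "K = 1 + (\<Sum>r\<in>I'. dotp X y (a r) / dotp X z (b r))"
              define \<mu> where "\<mu> = (-1 - K * dotp X z (a r0)) / \<alpha>"
              define w where "w = (\<lambda>x. K * z x + \<mu> * y x)"
              have wd: "dotp X w v = K * dotp X z v + \<mu> * dotp X y v" for v
                unfolding w_def by (rule dotp_lin)
              have m: "\<mu> * \<alpha> = -1 - K * dotp X z (a r0)" unfolding \<mu>_def using ap by simp
              have "\<forall>r\<in>insert r0 I'. dotp X w (a r) < 0"
              proof
                fix r assume r: "r \<in> insert r0 I'"
                show "dotp X w (a r) < 0"
                proof (cases "r = r0")
                  case True
                  have e: "dotp X w (a r0) = K * dotp X z (a r0) + \<mu> * dotp X y (a r0)" by (rule wd)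
                  have m': "\<mu> * dotp X y (a r0) = -1 - K * dotp X z (a r0)" using m unfolding \<alpha>_def .
                  have "dotp X w (a r0) = -1" unfolding e m' by simp
                  then show ?thesis using True by simp
                next
                  case False
                  then have rI: "r \<in> I'" using r by simp
                  have nn: "\<And>s. s \<in> I' \<Longrightarrow> 0 \<le> dotp X y (a s) / dotp X z (b s)"
                    using y z by (simp add: divide_nonpos_neg less_imp_le)
                  have "dotp X y (a r) / dotp X z (b r) \<le> (\<Sum>r\<in>I'. dotp X y (a r) / dotp X z (b r))"
                    by (rule member_le_sum[OF rI _ insert.hyps(1)]) (auto intro: nn)
                  then have Kgt: "K > dotp X y (a r) / dotp X z (b r)" unfolding K_def by simp
                  have zbr: "dotp X z (b r) < 0" using z rI by auto
                  have "K * dotp X z (b r) < dotp X y (a r)"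
                    using Kgt zbr neg_divide_less_eq by blast
                  then have "\<alpha> * dotp X w (a r) < 0"
                  proof -
                    have "\<alpha> * dotp X w (a r) = K * dotp X z (b r) - dotp X y (a r)"
                    proof -
                      have "\<alpha> * dotp X w (a r) = K * (\<alpha> * dotp X z (a r)) + (\<mu> * \<alpha>) * dotp X y (a r)"
                        by (simp add: wd algebra_simps)
                      also have "\<dots> = K * (\<alpha> * dotp X z (a r)) + (-1 - K * dotp X z (a r0)) * dotp X y (a r)"
                        by (simp only: m)
                      also have "\<dots> = K * dotp X z (b r) - dotp X y (a r)"
                        by (simp add: zb algebra_simps)
                      finally show ?thesis .
                    qed
                    then show ?thesis using \<open>K * dotp X z (b r) < dotp X y (a r)\<close> by simp
                  qed
                  then show ?thesis using ap by (simp add: mult_less_0_iff)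
                qed
              qed
              then show ?thesis by blast
            next
              case a0: True
              obtain r1 where r1: "r1 \<in> I'" using Ine by blast
              have za0: "dotp X z (a r0) < 0"
              proof -
                have h1: "dotp X z (b r1) = - dotp X y (a r1) * dotp X z (a r0)" using zb a0 by simp
                have h2: "dotp X z (b r1) < 0" "dotp X y (a r1) < 0" using z y r1 by auto
                show ?thesis
                proof (rule ccontr)
                  assume "\<not> dotp X z (a r0) < 0"
                  then have "dotp X y (a r1) * dotp X z (a r0) \<le> 0"
                    using h2 by (intro mult_nonpos_nonneg) auto
                  then show False using h1 h2 by linarith
                qed
              qed
              define K where "K = 1 + (\<Sum>r\<in>I'. \<bar>dotp X z (a r) / dotp X y (a r)\<bar>)"
              define w where "w = (\<lambda>x. K * y x + 1 * z x)"
              have wd: "dotp X w v = K * dotp X y v + 1 * dotp X z v" for v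
                unfolding w_def by (rule dotp_lin)
              have "\<forall>r\<in>insert r0 I'. dotp X w (a r) < 0"
              proof
                fix r assume r: "r \<in> insert r0 I'"
                show "dotp X w (a r) < 0"
                proof (cases "r = r0")
                  case True
                  have "dotp X y (a r0) = 0" using a0 \<alpha>_def by simp
                  then show ?thesis using za0 True by (simp add: wd)
                next
                  case False
                  then have rI: "r \<in> I'" using r by simp
                  have "\<bar>dotp X z (a r) / dotp X y (a r)\<bar> \<le> (\<Sum>r\<in>I'. \<bar>dotp X z (a r) / dotp X y (a r)\<bar>)"
                    by (rule member_le_sum[OF rI _ insert.hyps(1)]) simp
                  then have Kgt: "K > \<bar>dotp X z (a r) / dotp X y (a r)\<bar>" unfolding K_def by simp
                  have yr: "dotp X y (a r) < 0" using y rI by auto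
                  have "- dotp X z (a r) / dotp X y (a r) < K" using Kgt by linarith
                  then have "K * dotp X y (a r) < - dotp X z (a r)"
                    using yr neg_divide_less_eq by blast
                  then show ?thesis by (simp add: wd)
                qed
              qed
              then show ?thesis by blast
            qed
          qed
        qed
      qed
    qed
  qed
qed

theorem theorem2:
  fixes X :: "'x set" and R Rrev Rirr :: "'x reaction set"
  assumes "mixed_RN X R Rrev Rirr"
    and "closed_RN X R"
  shows "thermodynamically_sound X R Rirr \<longleftrightarrow> \<not> (\<exists>v. irreversible_futile_cycle X R Rirr v)"
proof -
  have fR: "finite R" and fX: "finite X" and RI: "Rirr \<subseteq> R"
    using assms(1) by (auto simp: mixed_RN_def reaction_network_def)
  have fI: "finite Rirr" using fR RI finite_subset by blast
  show ?thesis
  proof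
    assume "thermodynamically_sound X R Rirr"
    then obtain g where g: "thermodynamic X R g" "\<forall>r\<in>Rirr. g r < 0"
      by (auto simp: thermodynamically_sound_def)
    show "\<not> (\<exists>v. irreversible_futile_cycle X R Rirr v)"
    proof
      assume "\<exists>v. irreversible_futile_cycle X R Rirr v"
      then obtain v where v: "\<forall>r\<in>R. 0 \<le> v r" "\<exists>r\<in>R. v r \<noteq> 0" "stoich_kernel X R v"
        "\<forall>r\<in>R. v r \<noteq> 0 \<longrightarrow> r \<in> Rirr"
        by (auto simp: irreversible_futile_cycle_def futile_cycle_def)
      have "(\<Sum>r\<in>R. g r * v r) = 0" using g(1) v(3) by (auto simp: thermodynamic_def)
      moreover have "(\<Sum>r\<in>R. g r * v r) < 0"
      proof -
        from v(2) obtain r1 where r1: "r1 \<in> R" "v r1 \<noteq> 0" by blast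
        have "(\<Sum>r\<in>R. - (g r * v r)) > 0"
        proof (rule sum_pos2[OF fR r1(1)])
          show "0 < - (g r1 * v r1)"
          proof -
            have "r1 \<in> Rirr" "0 < v r1" using r1 v(1,4) by (auto simp: order_le_neq_trans)
            then have "g r1 * v r1 < 0" using g(2) by (simp add: mult_neg_pos)
            then show ?thesis by simp
          qed
          show "\<And>i. i \<in> R \<Longrightarrow> 0 \<le> - (g i * v i)"
          proof -
            fix i assume i: "i \<in> R"
            show "0 \<le> - (g i * v i)"
            proof (cases "v i = 0")
              case False
              then have "i \<in> Rirr" "0 \<le> v i" using i v(1,4) by auto
              then have "g i * v i \<le> 0" using g(2) by (simp add: mult_nonpos_nonneg less_imp_le)
              then show ?thesis by simp
            qed simp
          qed
        qed
        then show ?thesis by (simp add: sum_negf)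
      qed
      ultimately show False by simp
    qed
  next
    assume nf: "\<not> (\<exists>v. irreversible_futile_cycle X R Rirr v)"
    define a :: "'x reaction \<Rightarrow> 'x \<Rightarrow> real" where "a = (\<lambda>r x. real_of_int (stoich x r))"
    from gordan[OF fI fX, rule_format, of a]
    have "(\<exists>y. \<forall>r\<in>Rirr. dotp X y (a r) < 0) \<or>
      (\<exists>l. (\<forall>r\<in>Rirr. 0 \<le> l r) \<and> (\<exists>r\<in>Rirr. l r \<noteq> 0) \<and> (\<forall>x\<in>X. (\<Sum>r\<in>Rirr. l r * a r x) = 0))" .
    then show "thermodynamically_sound X R Rirr"
    proof
      assume "\<exists>y. \<forall>r\<in>Rirr. dotp X y (a r) < 0"
      then obtain y where y: "\<forall>r\<in>Rirr. dotp X y (a r) < 0" by blast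
      define g where "g = (\<lambda>r. dotp X y (a r))"
      have "thermodynamic X R g"
        unfolding thermodynamic_def
      proof (intro allI impI)
        fix v assume "stoich_kernel X R v"
        then have k: "\<forall>x\<in>X. (\<Sum>r\<in>R. real_of_int (stoich x r) * v r) = 0"
          by (simp add: stoich_kernel_def)
        have "(\<Sum>r\<in>R. g r * v r) = (\<Sum>r\<in>R. \<Sum>x\<in>X. y x * (real_of_int (stoich x r) * v r))"
          by (simp add: g_def dotp_def a_def sum_distrib_right mult.assoc)
        also have "\<dots> = (\<Sum>x\<in>X. y x * (\<Sum>r\<in>R. real_of_int (stoich x r) * v r))"
          by (subst sum.swap) (simp add: sum_distrib_left)
        also have "\<dots> = 0" using k by simp
        finally show "(\<Sum>r\<in>R. g r * v r) = 0" .
      qed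
      then show ?thesis using y unfolding thermodynamically_sound_def g_def by blast
    next
      assume "\<exists>l. (\<forall>r\<in>Rirr. 0 \<le> l r) \<and> (\<exists>r\<in>Rirr. l r \<noteq> 0) \<and> (\<forall>x\<in>X. (\<Sum>r\<in>Rirr. l r * a r x) = 0)"
      then obtain l where l: "\<forall>r\<in>Rirr. 0 \<le> l r" "\<exists>r\<in>Rirr. l r \<noteq> 0"
        "\<forall>x\<in>X. (\<Sum>r\<in>Rirr. l r * a r x) = 0" by blast
      define v where "v = (\<lambda>r. if r \<in> Rirr then l r else 0)"
      have "irreversible_futile_cycle X R Rirr v"
        unfolding irreversible_futile_cycle_def futile_cycle_def stoich_kernel_def
      proof (intro conjI ballI impI)
        fix x assume x: "x \<in> X"
        have "(\<Sum>r\<in>R. real_of_int (stoich x r) * v r) = (\<Sum>r\<in>Rirr. real_of_int (stoich x r) * v r)"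
          by (rule sum.mono_neutral_right[OF fR RI]) (auto simp: v_def)
        also have "\<dots> = (\<Sum>r\<in>Rirr. l r * a r x)"
          by (rule sum.cong) (auto simp: v_def a_def)
        finally show "(\<Sum>r\<in>R. real_of_int (stoich x r) * v r) = 0" using l(3) x by simp
      qed (use l RI in \<open>auto simp: v_def split: if_splits\<close>)
      then show ?thesis using nf by blast
    qed
  qed
qed

end
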